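(* Let $\mathcal{X}$ be a family of subsets of $[d]$. Consider any two runs of the refinement procedure starting from $\mathrm{val}^1_{\mathcal{X}}=\mathrm{val}_{\mathcal{X}}$ (possibly making different choices of subsets at each step) which both reach a stationary function, i.e. some $\mathrm{val}^{n}$ with $\mathrm{val}^{n+1}=\mathrm{val}^{n}$. Then the two stationary functions coincide; in other words, $v_{\mathcal{X}}$ does not depend on the choices made.
   Context: A proper $\mathcal{X}$-sequence is a sequence $\mathcal{S}=(X_1,\dots,X_k)$ ($k\ge0$) of members of $\mathcal{X}$ with $X_i\not\subseteq\bigcup_{j<i}X_j$ for $i=2,\dots,k$. For $F\subseteq[d]$, $\mathrm{val}(F,\mathcal{S})=|F\cup\bigcup_{i=1}^kX_i|-k$ and $\mathrm{val}_{\mathcal{X}}(F)=\min_{\mathcal{S}}\mathrm{val}(F,\mathcal{S})$ over proper $\mathcal{X}$-sequences. Refinement procedure: given $\mathrm{val}^n:2^{[d]}\to\mathbb{Z}$, define $\mathrm{val}^{n+1}$ as follows. (i) If there are $A,B\subseteq[d]$ and $x\in\mathcal{X}$ with $A\cap B\subseteq x$ and $\mathrm{val}^n(A\cup B)>\mathrm{val}^n(A)+\mathrm{val}^n(B)-\min\{|A\cap B|,|x|-1\}$, choose one such and set $\mathrm{val}^{n+1}(A\cup B)$ equal to the right-hand side, leaving all other values unchanged. (ii) Otherwise, if there are $A\subsetneq B$ with $\mathrm{val}^n(A)>\mathrm{val}^n(B)$, choose one and set $\mathrm{val}^{n+1}(A)=\mathrm{val}^n(B)$, others unchanged. (iii)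 Otherwise, if there are $B\subsetneq A$ with $\mathrm{val}^n(A)>\mathrm{val}^n(B)+|A\setminus B|$, choose one and set $\mathrm{val}^{n+1}(A)=\mathrm{val}^n(B)+|A\setminus B|$, others unchanged. (iv) Otherwise $\mathrm{val}^{n+1}=\mathrm{val}^n$. When the sequence becomes stationary, the stationary function is denoted $v_{\mathcal{X}}$. *)

theory Defs
  imports Main
begin

text \<open>Ground set [d] = {1..d}. Set functions are modelled as functions nat set => int;
  the refinement procedure only ever changes values on subsets of [d].\<close>

definition proper_seq :: "nat set set \<Rightarrow> nat set list \<Rightarrow> bool" where
  "proper_seq \<X> S \<longleftrightarrow> set S \<subseteq> \<X> \<and>
     (\<forall>i. 1 \<le> i \<and> i < length S \<longrightarrow> \<not> (S ! i \<subseteq> \<Union> (set (take i S))))"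

definition val_seq :: "nat set \<Rightarrow> nat set list \<Rightarrow> int" where
  "val_seq F S = int (card (F \<union> \<Union> (set S))) - int (length S)"

definition valX :: "nat set set \<Rightarrow> nat set \<Rightarrow> int" where
  "valX \<X> F = Min {val_seq F S | S. proper_seq \<X> S}"

definition cond_i :: "nat \<Rightarrow> nat set set \<Rightarrow> (nat set \<Rightarrow> int) \<Rightarrow> bool" where
  "cond_i d \<X> f \<longleftrightarrow> (\<exists>A B x. A \<subseteq> {1..d} \<and> B \<subseteq> {1..d} \<and> x \<in> \<X> \<and> A \<inter> B \<subseteq> x \<and>
       f (A \<union> B) > f A + f B - min (int (card (A \<inter> B))) (int (card x) - 1))"

definition cond_ii :: "nat \<Rightarrow> (nat set \<Rightarrow> int) \<Rightarrow> bool" where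
  "cond_ii d f \<longleftrightarrow> (\<exists>A B. B \<subseteq> {1..d} \<and> A \<subset> B \<and> f A > f B)"

definition cond_iii :: "nat \<Rightarrow> (nat set \<Rightarrow> int) \<Rightarrow> bool" where
  "cond_iii d f \<longleftrightarrow> (\<exists>A B. A \<subseteq> {1..d} \<and> B \<subset> A \<and> f A > f B + int (card (A - B)))"

definition refine_step :: "nat \<Rightarrow> nat set set \<Rightarrow> (nat set \<Rightarrow> int) \<Rightarrow> (nat set \<Rightarrow> int) \<Rightarrow> bool" where
  "refine_step d \<X> f g \<longleftrightarrow>
     (if cond_i d \<X> f then
        (\<exists>A B x. A \<subseteq> {1..d} \<and> B \<subseteq> {1..d} \<and> x \<in> \<X> \<and> A \<inter> B \<subseteq> x \<and>
           f (A \<union> B) > f A + f B - min (int (card (A \<inter> B))) (int (card x) - 1) \<and>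
           g = f (A \<union> B := f A + f B - min (int (card (A \<inter> B))) (int (card x) - 1)))
      else if cond_ii d f then
        (\<exists>A B. B \<subseteq> {1..d} \<and> A \<subset> B \<and> f A > f B \<and> g = f (A := f B))
      else if cond_iii d f then
        (\<exists>A B. A \<subseteq> {1..d} \<and> B \<subset> A \<and> f A > f B + int (card (A - B)) \<and>
           g = f (A := f B + int (card (A - B))))
      else g = f)"

definition refine_run :: "nat \<Rightarrow> nat set set \<Rightarrow> (nat \<Rightarrow> nat set \<Rightarrow> int) \<Rightarrow> bool" where
  "refine_run d \<X> v \<longleftrightarrow> v 1 = valX \<X> \<and> (\<forall>n\<ge>1. refine_step d \<X> (v n) (v (Suc n)))"

end

theory Submission
  imports Defs
begin

definition closedf :: "nat \<Rightarrow> nat set set \<Rightarrow> (nat set \<Rightarrow> int) \<Rightarrow> bool" where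
  "closedf d X f \<longleftrightarrow> \<not> cond_i d X f \<and> \<not> cond_ii d f \<and> \<not> cond_iii d f"

lemma step_le: "refine_step d X f g \<Longrightarrow> g S \<le> f S"
  unfolding refine_step_def
  by (auto split: if_splits)

lemma upd_eq: "f = f(a := b) \<Longrightarrow> f a = b"
  by (metis fun_upd_same)

lemma step_stat: "refine_step d X f f \<Longrightarrow> closedf d X f"
  unfolding refine_step_def closedf_def
  by (smt (verit) upd_eq)

lemma step_ge:
  assumes st: "refine_step d X f f'" and cl: "closedf d X g" and le: "\<forall>S. g S \<le> f S"
  shows "\<forall>S. g S \<le> f' S"
proof -
  have ci: "\<And>A B x. A \<subseteq> {1..d} \<Longrightarrow> B \<subseteq> {1..d} \<Longrightarrow> x \<in> X \<Longrightarrow> A \<inter> B \<subseteq> x \<Longrightarrow>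
      g (A \<union> B) \<le> g A + g B - min (int (card (A \<inter> B))) (int (card x) - 1)"
    using cl unfolding closedf_def cond_i_def by (meson not_le)
  have cii: "\<And>A B. B \<subseteq> {1..d} \<Longrightarrow> A \<subset> B \<Longrightarrow> g A \<le> g B"
    using cl unfolding closedf_def cond_ii_def by (meson not_le)
  have ciii: "\<And>A B. A \<subseteq> {1..d} \<Longrightarrow> B \<subset> A \<Longrightarrow> g A \<le> g B + int (card (A - B))"
    using cl unfolding closedf_def cond_iii_def by (meson not_le)
  have upd: "\<And>T c. g T \<le> c \<Longrightarrow> \<forall>S. g S \<le> (f(T := c)) S" using le by simp
  show ?thesis
  proof (cases "cond_i d X f")
    case True
    then obtain A B x where h: "A \<subseteq> {1..d}" "B \<subseteq> {1..d}" "x \<in> X" "A \<inter> B \<subseteq> x"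
      and e: "f' = f(A \<union> B := f A + f B - min (int (card (A \<inter> B))) (int (card x) - 1))"
      using st unfolding refine_step_def by auto
    have "g (A \<union> B) \<le> f A + f B - min (int (card (A \<inter> B))) (int (card x) - 1)"
      using ci[OF h] le by (smt (verit))
    then show ?thesis using upd e by simp
  next
    case n1: False
    show ?thesis
    proof (cases "cond_ii d f")
      case True
      then obtain A B where h: "B \<subseteq> {1..d}" "A \<subset> B" and e: "f' = f(A := f B)"
        using st n1 unfolding refine_step_def by auto
      have "g A \<le> f B" using cii[OF h] le by (smt (verit))
      then show ?thesis using upd e by simp
    next
      case n2: False
      show ?thesis
      proof (cases "cond_iii d f")
        case True
        then obtain A B where h: "A \<subseteq> {1..d}" "B \<subset> A" and e: "f' = f(A := f B + int (card (A - B)))"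
          using st n1 n2 unfolding refine_step_def by auto
        have "g A \<le> f B + int (card (A - B))" using ciii[OF h] le by (smt (verit))
        then show ?thesis using upd e by simp
      next
        case False
        then have "f' = f" using st n1 n2 unfolding refine_step_def by auto
        then show ?thesis using le by simp
      qed
    qed
  qed
qed

lemma run_le: "k \<ge> 1 \<Longrightarrow> refine_run d X v \<Longrightarrow> v k S \<le> valX X S"
proof (induction k rule: nat_induct_at_least)
  case base then show ?case by (simp add: refine_run_def)
next
  case (Suc k) then show ?case unfolding refine_run_def by (meson order_trans step_le)
qed

lemma run_ge: "k \<ge> 1 \<Longrightarrow> refine_run d X v \<Longrightarrow> closedf d X g \<Longrightarrow> \<forall>S. g S \<le> valX X S \<Longrightarrow> \<forall>S. g S \<le> v k S"
proof (induction k rule: nat_induct_at_least)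
  case base then show ?case by (simp add: refine_run_def)
next
  case (Suc k) then show ?case unfolding refine_run_def by (meson step_ge)
qed

theorem mainTheorem16:
  fixes d :: nat and \<X> :: "nat set set"
    and v w :: "nat \<Rightarrow> nat set \<Rightarrow> int" and n m :: nat
  assumes "\<X> \<subseteq> Pow {1..d}"
    and "refine_run d \<X> v" and "refine_run d \<X> w"
    and "n \<ge> 1" and "v (Suc n) = v n"
    and "m \<ge> 1" and "w (Suc m) = w m"
  shows "v n = w m"
proof -
  have cv: "closedf d \<X> (v n)" using assms(2,4,5) unfolding refine_run_def
    by (metis step_stat)
  have cw: "closedf d \<X> (w m)" using assms(3,6,7) unfolding refine_run_def
    by (metis step_stat)
  have "\<forall>S. v n S \<le> w m S"
    using run_ge[OF assms(6,3) cv] run_le[OF assms(4,2)] by blast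
  moreover have "\<forall>S. w m S \<le> v n S"
    using run_ge[OF assms(4,2) cw] run_le[OF assms(6,3)] by blast
  ultimately show ?thesis by (intro ext) (meson order_antisym)
qed

end
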